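(* For any simplicial models $\mathcal{C}$, $\mathcal{D}$ with facets $F\in\mathcal{F}(C^{\mathcal C})$, $G\in\mathcal{F}(C^{\mathcal D})$, if $\mathcal{C},F$ and $\mathcal{D},G$ are bisimilar then they are $\mathcal{L}$-logically equivalent. Likewise, for any first-order Kripke models $\mathcal{M},\mathcal{N}$ with worlds $w\in W^{\mathcal M}$, $v\in W^{\mathcal N}$, if $\mathcal{M},w$ and $\mathcal{N},v$ are bisimilar then they are $\mathcal{L}$-logically equivalent.
   Context: Fix a nonempty finite set $\mathbf{A}$ of agents, a countable set $\mathbf{X}$ of variables with $\mathbf{A}\cap\mathbf{X}=\emptyset$, and a countable set $\mathbf{P}$ of unary predicate letters. Formulas of $\mathcal{L}$ and their free variables are defined simultaneously: $\phi ::= p_x \mid \top \mid \neg\phi \mid (\phi\wedge\phi) \mid [x:=a]\phi \mid \mathsf{K}_X\alpha$, where $p\in\mathbf{P}$, $x\in\mathbf{X}$, $a\in\mathbf{A}$, $X\subseteq\mathbf{X}$ is finite (possibly empty) and $\alpha$ is a formula with $FV(\alpha)=\emptyset$; $FV(p_x)=\{x\}$, $FV(\top)=\emptyset$, $FV(\neg\phi)=FV(\phi)$, $FV(\phi\wedge\psi)=FV(\phi)\cup FV(\psi)$, $FV([x:=a]\phi)=FV(\phi)\setminus\{x\}$, $FV(\mathsf{K}_X\alpha)=X$. Formulas without free variables are sentences. A simplicial model is $\mathcal{C}=(\mathcal{V},C,\chi,\ell)$ with $\mathcal{V}\neq\emptyset$, $C\subseteq\wp(\mathcal{V})$ such that $\emptyset\notin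 C$, $C$ is closed under nonempty subsets and contains every singleton; $\chi:\mathcal{V}\to\mathbf{A}$ is injective on every member of $C$; $\ell:\mathbf{P}\to\wp(\mathcal{V})$. The facets $\mathcal{F}(C)$ are the inclusion-maximal elements of $C$. A first-order Kripke model is $\mathcal{M}=(W,\delta,\{R_a\}_{a\in\mathbf{A}},\rho)$ with $W\neq\emptyset$, $\delta:W\to\wp(\mathbf{A})\setminus\{\emptyset\}$, $R_a\subseteq W\times W$ with $R_a(w)=\emptyset$ whenever $a\notin\delta(w)$, and $\rho:\mathbf{P}\times W\to\wp(\mathbf{A})$ with $\rho(p,w)\subseteq\delta(w)$. An assignment $\sigma:\mathbf{X}\to\mathbf{A}$ is admissible for $\mathcal{C},F,\phi$ if $\sigma[FV(\phi)]\subseteq\chi[F]$, and for $\mathcal{M},w,\phi$ if $\sigma[FV(\phi)]\subseteq\delta(w)$. Satisfaction is defined for admissible assignments (Boolean clauses standard): $\mathcal{C},F,\sigma\Vdash p_x$ iff $\sigma(x)\in\chi[F\cap\ell(p)]$; $\mathcal{C},F,\sigma\Vdash[x:=a]\phi$ iff ($a\in\chi[F]$ implies $\mathcal{C},F,\sigma[x\mapsto a]\Vdash\phi$); $\mathcal{C},F,\sigma\Vdash\mathsf{K}_X\alpha$ iff for all $G\in\mathcal{F}(C)$ with $\sigma[X]\subseteq\chi[F\cap G]$, $\mathcal{C},G,\sigma\Vdash\alpha$. $\mathcal{M},w,\sigma\vDash p_x$ iff $\sigma(x)\in\rho(p,w)$; $\mathcal{M},w,\sigma\vDash[x:=a]\phi$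 iff ($a\in\delta(w)$ implies $\mathcal{M},w,\sigma[x\mapsto a]\vDash\phi$); $\mathcal{M},w,\sigma\vDash\mathsf{K}_X\alpha$ iff for all $v\in\bigcap_{a\in\sigma[X]}R_a(w)$ (the empty intersection being $W$), $\mathcal{M},v,\sigma\vDash\alpha$. Truth of a sentence is independent of the assignment. Two pointed models (of the same kind) are $\mathcal{L}$-logically equivalent if they satisfy exactly the same sentences. A bisimulation between simplicial models $\mathcal{C},\mathcal{D}$ is $Z\subseteq\mathcal{F}(C^{\mathcal C})\times\mathcal{F}(C^{\mathcal D})$ such that for all $(F,G)\in Z$: (Inv) $\chi^{\mathcal C}[F]=\chi^{\mathcal D}[G]$ and $\chi^{\mathcal C}[F\cap\ell^{\mathcal C}(p)]=\chi^{\mathcal D}[G\cap\ell^{\mathcal D}(p)]$ for all $p$; (Zig) for all $A\subseteq\mathbf{A}$ and facets $F'$ of $\mathcal{C}$ with $A\subseteq\chi^{\mathcal C}[F\cap F']$ there is a facet $G'$ of $\mathcal{D}$ with $A\subseteq\chi^{\mathcal D}[G\cap G']$ and $(F',G')\in Z$; (Zag) the symmetric condition. A bisimulation between first-order Kripke models $\mathcal{M},\mathcal{N}$ is $Z\subseteq W^{\mathcal M}\times W^{\mathcal N}$ such that for all $(w,v)\in Z$: (Inv) $\delta^{\mathcal M}(w)=\delta^{\mathcal N}(v)$ and $\rho^{\mathcal M}(p,w)=\rho^{\mathcal N}(p,v)$ for all $p$; (Zig) for all $A\subseteq\mathbf{A}$ and $w'\in\bigcap_{a\in A}R^{\mathcal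 M}_a(w)$ there is $v'\in\bigcap_{a\in A}R^{\mathcal N}_a(v)$ with $(w',v')\in Z$; (Zag) symmetric. Pointed models are bisimilar if some bisimulation relates the points. *)

theory Defs
  imports Main "HOL-Library.Countable"
begin

text \<open>Agents: type 'a (finite, nonempty since types are nonempty);
 variables: type 'x (countable); unary predicate letters: type 'p (countable).
 Agents and variables live in different types, hence are disjoint.\<close>

datatype ('a, 'x, 'p) form =
    Pred 'p 'x
  | Top
  | Neg "('a, 'x, 'p) form"
  | Conj "('a, 'x, 'p) form" "('a, 'x, 'p) form"
  | Assign 'x 'a "('a, 'x, 'p) form"
  | Know "'x set" "('a, 'x, 'p) form"

fun FV :: "('a, 'x, 'p) form \<Rightarrow> 'x set" where
  "FV (Pred p x) = {x}"
| "FV Top = {}"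
| "FV (Neg \<phi>) = FV \<phi>"
| "FV (Conj \<phi> \<psi>) = FV \<phi> \<union> FV \<psi>"
| "FV (Assign x a \<phi>) = FV \<phi> - {x}"
| "FV (Know X \<alpha>) = X"

fun wf_form :: "('a, 'x, 'p) form \<Rightarrow> bool" where
  "wf_form (Pred p x) = True"
| "wf_form Top = True"
| "wf_form (Neg \<phi>) = wf_form \<phi>"
| "wf_form (Conj \<phi> \<psi>) = (wf_form \<phi> \<and> wf_form \<psi>)"
| "wf_form (Assign x a \<phi>) = wf_form \<phi>"
| "wf_form (Know X \<alpha>) = (finite X \<and> FV \<alpha> = {} \<and> wf_form \<alpha>)"

definition sentence :: "('a, 'x, 'p) form \<Rightarrow> bool" where
  "sentence \<phi> \<longleftrightarrow> wf_form \<phi> \<and> FV \<phi> = {}"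

record ('v, 'a, 'p) smodel =
  verts :: "'v set"
  cplx :: "'v set set"
  chi :: "'v \<Rightarrow> 'a"
  lab :: "'p \<Rightarrow> 'v set"

definition simplicial_model :: "('v, 'a, 'p) smodel \<Rightarrow> bool" where
  "simplicial_model S \<longleftrightarrow>
     verts S \<noteq> {} \<and>
     cplx S \<subseteq> Pow (verts S) \<and>
     {} \<notin> cplx S \<and>
     (\<forall>X\<in>cplx S. \<forall>Y. Y \<subseteq> X \<and> Y \<noteq> {} \<longrightarrow> Y \<in> cplx S) \<and>
     (\<forall>v\<in>verts S. {v} \<in> cplx S) \<and>
     (\<forall>X\<in>cplx S. inj_on (chi S) X) \<and>
     (\<forall>p. lab S p \<subseteq> verts S)"

definition facets :: "('v, 'a, 'p) smodel \<Rightarrow> 'v set set" where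
  "facets S = {F \<in> cplx S. \<forall>G\<in>cplx S. F \<subseteq> G \<longrightarrow> G = F}"

fun ssat :: "('v, 'a, 'p) smodel \<Rightarrow> 'v set \<Rightarrow> ('x \<Rightarrow> 'a) \<Rightarrow> ('a, 'x, 'p) form \<Rightarrow> bool" where
  "ssat S F \<sigma> (Pred p x) = (\<sigma> x \<in> chi S ` (F \<inter> lab S p))"
| "ssat S F \<sigma> Top = True"
| "ssat S F \<sigma> (Neg \<phi>) = (\<not> ssat S F \<sigma> \<phi>)"
| "ssat S F \<sigma> (Conj \<phi> \<psi>) = (ssat S F \<sigma> \<phi> \<and> ssat S F \<sigma> \<psi>)"
| "ssat S F \<sigma> (Assign x a \<phi>) = (a \<in> chi S ` F \<longrightarrow> ssat S F (\<sigma>(x := a)) \<phi>)"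
| "ssat S F \<sigma> (Know X \<alpha>) =
     (\<forall>G\<in>facets S. \<sigma> ` X \<subseteq> chi S ` (F \<inter> G) \<longrightarrow> ssat S G \<sigma> \<alpha>)"

definition s_bisimulation ::
  "('v1, 'a, 'p) smodel \<Rightarrow> ('v2, 'a, 'p) smodel \<Rightarrow> ('v1 set \<times> 'v2 set) set \<Rightarrow> bool" where
  "s_bisimulation C D Z \<longleftrightarrow>
     Z \<subseteq> facets C \<times> facets D \<and>
     (\<forall>(F, G)\<in>Z.
        chi C ` F = chi D ` G \<and>
        (\<forall>p. chi C ` (F \<inter> lab C p) = chi D ` (G \<inter> lab D p)) \<and>
        (\<forall>A F'. F' \<in> facets C \<and> A \<subseteq> chi C ` (F \<inter> F') \<longrightarrow>
            (\<exists>G'\<in>facets D. A \<subseteq> chi D ` (G \<inter> G') \<and> (F', G') \<in> Z)) \<and>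
        (\<forall>A G'. G' \<in> facets D \<and> A \<subseteq> chi D ` (G \<inter> G') \<longrightarrow>
            (\<exists>F'\<in>facets C. A \<subseteq> chi C ` (F \<inter> F') \<and> (F', G') \<in> Z)))"

definition s_bisimilar ::
  "('v1, 'a, 'p) smodel \<Rightarrow> 'v1 set \<Rightarrow> ('v2, 'a, 'p) smodel \<Rightarrow> 'v2 set \<Rightarrow> bool" where
  "s_bisimilar C F D G \<longleftrightarrow> (\<exists>Z. s_bisimulation C D Z \<and> (F, G) \<in> Z)"

text \<open>Logical equivalence w.r.t. sentences of L (variables of type 'x);
 truth of a sentence does not depend on the assignment.\<close>
definition s_lequiv ::
  "'x itself \<Rightarrow> ('v1, 'a, 'p) smodel \<Rightarrow> 'v1 set \<Rightarrow> ('v2, 'a, 'p) smodel \<Rightarrow> 'v2 set \<Rightarrow> bool" where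
  "s_lequiv _ C F D G \<longleftrightarrow>
     (\<forall>(\<phi> :: ('a, 'x, 'p) form) (\<sigma> :: 'x \<Rightarrow> 'a). sentence \<phi> \<longrightarrow>
        (ssat C F \<sigma> \<phi> \<longleftrightarrow> ssat D G \<sigma> \<phi>))"

record ('w, 'a, 'p) kmodel =
  worlds :: "'w set"
  dom :: "'w \<Rightarrow> 'a set"
  rel :: "'a \<Rightarrow> 'w \<Rightarrow> 'w set"
  rho :: "'p \<Rightarrow> 'w \<Rightarrow> 'a set"

definition kripke_model :: "('w, 'a, 'p) kmodel \<Rightarrow> bool" where
  "kripke_model M \<longleftrightarrow>
     worlds M \<noteq> {} \<and>
     (\<forall>w\<in>worlds M. dom M w \<noteq> {}) \<and>
     (\<forall>a w. rel M a w \<subseteq> worlds M) \<and>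
     (\<forall>a w. w \<notin> worlds M \<longrightarrow> rel M a w = {}) \<and>
     (\<forall>a. \<forall>w\<in>worlds M. a \<notin> dom M w \<longrightarrow> rel M a w = {}) \<and>
     (\<forall>p. \<forall>w\<in>worlds M. rho M p w \<subseteq> dom M w)"

text \<open>Intersection of the R_a(w) over a in A; for A empty this is W.\<close>
definition inter_rel :: "('w, 'a, 'p) kmodel \<Rightarrow> 'a set \<Rightarrow> 'w \<Rightarrow> 'w set" where
  "inter_rel M A w = {v \<in> worlds M. \<forall>a\<in>A. v \<in> rel M a w}"

fun ksat :: "('w, 'a, 'p) kmodel \<Rightarrow> 'w \<Rightarrow> ('x \<Rightarrow> 'a) \<Rightarrow> ('a, 'x, 'p) form \<Rightarrow> bool" where
  "ksat M w \<sigma> (Pred p x) = (\<sigma> x \<in> rho M p w)"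
| "ksat M w \<sigma> Top = True"
| "ksat M w \<sigma> (Neg \<phi>) = (\<not> ksat M w \<sigma> \<phi>)"
| "ksat M w \<sigma> (Conj \<phi> \<psi>) = (ksat M w \<sigma> \<phi> \<and> ksat M w \<sigma> \<psi>)"
| "ksat M w \<sigma> (Assign x a \<phi>) = (a \<in> dom M w \<longrightarrow> ksat M w (\<sigma>(x := a)) \<phi>)"
| "ksat M w \<sigma> (Know X \<alpha>) = (\<forall>v\<in>inter_rel M (\<sigma> ` X) w. ksat M v \<sigma> \<alpha>)"

definition k_bisimulation ::
  "('w1, 'a, 'p) kmodel \<Rightarrow> ('w2, 'a, 'p) kmodel \<Rightarrow> ('w1 \<times> 'w2) set \<Rightarrow> bool" where
  "k_bisimulation M N Z \<longleftrightarrow>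
     Z \<subseteq> worlds M \<times> worlds N \<and>
     (\<forall>(w, v)\<in>Z.
        dom M w = dom N v \<and>
        (\<forall>p. rho M p w = rho N p v) \<and>
        (\<forall>A. \<forall>w'\<in>inter_rel M A w. \<exists>v'\<in>inter_rel N A v. (w', v') \<in> Z) \<and>
        (\<forall>A. \<forall>v'\<in>inter_rel N A v. \<exists>w'\<in>inter_rel M A w. (w', v') \<in> Z))"

definition k_bisimilar ::
  "('w1, 'a, 'p) kmodel \<Rightarrow> 'w1 \<Rightarrow> ('w2, 'a, 'p) kmodel \<Rightarrow> 'w2 \<Rightarrow> bool" where
  "k_bisimilar M w N v \<longleftrightarrow> (\<exists>Z. k_bisimulation M N Z \<and> (w, v) \<in> Z)"

definition k_lequiv ::
  "'x itself \<Rightarrow> ('w1, 'a, 'p) kmodel \<Rightarrow> 'w1 \<Rightarrow> ('w2, 'a, 'p) kmodel \<Rightarrow> 'w2 \<Rightarrow> bool" where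
  "k_lequiv _ M w N v \<longleftrightarrow>
     (\<forall>(\<phi> :: ('a, 'x, 'p) form) (\<sigma> :: 'x \<Rightarrow> 'a). sentence \<phi> \<longrightarrow>
        (ksat M w \<sigma> \<phi> \<longleftrightarrow> ksat N v \<sigma> \<phi>))"

end

theory Submission
  imports Defs
begin

lemma s_bisimD:
  assumes "s_bisimulation C D Z" "(F, G) \<in> Z"
  shows "chi C ` F = chi D ` G \<and>
        (\<forall>p. chi C ` (F \<inter> lab C p) = chi D ` (G \<inter> lab D p)) \<and>
        (\<forall>A F'. F' \<in> facets C \<and> A \<subseteq> chi C ` (F \<inter> F') \<longrightarrow>
            (\<exists>G'\<in>facets D. A \<subseteq> chi D ` (G \<inter> G') \<and> (F', G') \<in> Z)) \<and>
        (\<forall>A G'. G' \<in> facets D \<and> A \<subseteq> chi D ` (G \<inter> G') \<longrightarrow>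
            (\<exists>F'\<in>facets C. A \<subseteq> chi C ` (F \<inter> F') \<and> (F', G') \<in> Z))"
  by (rule bspec[OF conjunct2[OF assms(1)[unfolded s_bisimulation_def]] assms(2), unfolded prod.case])

lemma k_bisimD:
  assumes "k_bisimulation M N Z" "(w, v) \<in> Z"
  shows "dom M w = dom N v \<and>
        (\<forall>p. rho M p w = rho N p v) \<and>
        (\<forall>A. \<forall>w'\<in>inter_rel M A w. \<exists>v'\<in>inter_rel N A v. (w', v') \<in> Z) \<and>
        (\<forall>A. \<forall>v'\<in>inter_rel N A v. \<exists>w'\<in>inter_rel M A w. (w', v') \<in> Z)"
  by (rule bspec[OF conjunct2[OF assms(1)[unfolded k_bisimulation_def]] assms(2), unfolded prod.case])

lemma s_bisim_sat:
  assumes Z: "s_bisimulation C D Z"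
  shows "(F, G) \<in> Z \<Longrightarrow> ssat C F \<sigma> \<phi> = ssat D G \<sigma> \<phi>"
proof (induction \<phi> arbitrary: F G \<sigma>)
  case (Pred p x)
  have "chi C ` (F \<inter> lab C p) = chi D ` (G \<inter> lab D p)"
    using s_bisimD[OF Z Pred] by (elim conjE allE)
  then show ?case by simp
next
  case (Assign x a \<phi>)
  have "chi C ` F = chi D ` G" using s_bisimD[OF Z Assign.prems] by (rule conjunct1)
  then show ?case by (simp add: Assign.IH[OF Assign.prems] fun_upd_def)
next
  case (Know X \<alpha>)
  note H = s_bisimD[OF Z Know.prems]
  have zig: "\<forall>A F'. F' \<in> facets C \<and> A \<subseteq> chi C ` (F \<inter> F') \<longrightarrow>
            (\<exists>G'\<in>facets D. A \<subseteq> chi D ` (G \<inter> G') \<and> (F', G') \<in> Z)"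
    using H by (elim conjE)
  have zag: "\<forall>A G'. G' \<in> facets D \<and> A \<subseteq> chi D ` (G \<inter> G') \<longrightarrow>
            (\<exists>F'\<in>facets C. A \<subseteq> chi C ` (F \<inter> F') \<and> (F', G') \<in> Z)"
    using H by (elim conjE)
  show ?case
  proof
    assume L: "ssat C F \<sigma> (Know X \<alpha>)"
    show "ssat D G \<sigma> (Know X \<alpha>)"
      unfolding ssat.simps
    proof (intro ballI impI)
      fix G' assume a1: "G' \<in> facets D" and a2: "\<sigma> ` X \<subseteq> chi D ` (G \<inter> G')"
      have "\<exists>F'\<in>facets C. \<sigma> ` X \<subseteq> chi C ` (F \<inter> F') \<and> (F', G') \<in> Z"
        using zag a1 a2 by (elim allE impE) (rule conjI)
      then obtain F' where b1: "F' \<in> facets C" and b2: "\<sigma> ` X \<subseteq> chi C ` (F \<inter> F')"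
        and b3: "(F', G') \<in> Z" by (elim bexE conjE)
      have "ssat C F' \<sigma> \<alpha>" using L b1 b2 by simp
      then show "ssat D G' \<sigma> \<alpha>" using Know.IH[OF b3] by simp
    qed
  next
    assume R: "ssat D G \<sigma> (Know X \<alpha>)"
    show "ssat C F \<sigma> (Know X \<alpha>)"
      unfolding ssat.simps
    proof (intro ballI impI)
      fix F' assume a1: "F' \<in> facets C" and a2: "\<sigma> ` X \<subseteq> chi C ` (F \<inter> F')"
      have "\<exists>G'\<in>facets D. \<sigma> ` X \<subseteq> chi D ` (G \<inter> G') \<and> (F', G') \<in> Z"
        using zig a1 a2 by (elim allE impE) (rule conjI)
      then obtain G' where b1: "G' \<in> facets D" and b2: "\<sigma> ` X \<subseteq> chi D ` (G \<inter> G')"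
        and b3: "(F', G') \<in> Z" by (elim bexE conjE)
      have "ssat D G' \<sigma> \<alpha>" using R b1 b2 by simp
      then show "ssat C F' \<sigma> \<alpha>" using Know.IH[OF b3] by simp
    qed
  qed
next
  case Top then show ?case by simp
next
  case (Neg \<psi>) then show ?case by simp
next
  case (Conj a b) then show ?case by simp
qed

lemma k_bisim_sat:
  assumes Z: "k_bisimulation M N Z"
  shows "(w, v) \<in> Z \<Longrightarrow> ksat M w \<sigma> \<phi> = ksat N v \<sigma> \<phi>"
proof (induction \<phi> arbitrary: w v \<sigma>)
  case (Pred p x)
  have "rho M p w = rho N p v"
    using k_bisimD[OF Z Pred] by (elim conjE allE)
  then show ?case by simp
next
  case (Assign x a \<phi>)
  have "dom M w = dom N v" using k_bisimD[OF Z Assign.prems] by (rule conjunct1)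
  then show ?case by (simp add: Assign.IH[OF Assign.prems] fun_upd_def)
next
  case (Know X \<alpha>)
  note H = k_bisimD[OF Z Know.prems]
  have zig: "\<forall>A. \<forall>w'\<in>inter_rel M A w. \<exists>v'\<in>inter_rel N A v. (w', v') \<in> Z"
    using H by (elim conjE)
  have zag: "\<forall>A. \<forall>v'\<in>inter_rel N A v. \<exists>w'\<in>inter_rel M A w. (w', v') \<in> Z"
    using H by (elim conjE)
  show ?case
  proof
    assume L: "ksat M w \<sigma> (Know X \<alpha>)"
    show "ksat N v \<sigma> (Know X \<alpha>)"
      unfolding ksat.simps
    proof
      fix v' assume a1: "v' \<in> inter_rel N (\<sigma> ` X) v"
      have "\<exists>w'\<in>inter_rel M (\<sigma> ` X) w. (w', v') \<in> Z"
        by (rule zag[rule_format, OF a1])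
      then obtain w' where b1: "w' \<in> inter_rel M (\<sigma> ` X) w" and b3: "(w', v') \<in> Z"
        by (elim bexE)
      have "ksat M w' \<sigma> \<alpha>" using L b1 by simp
      then show "ksat N v' \<sigma> \<alpha>" using Know.IH[OF b3] by simp
    qed
  next
    assume R: "ksat N v \<sigma> (Know X \<alpha>)"
    show "ksat M w \<sigma> (Know X \<alpha>)"
      unfolding ksat.simps
    proof
      fix w' assume a1: "w' \<in> inter_rel M (\<sigma> ` X) w"
      have "\<exists>v'\<in>inter_rel N (\<sigma> ` X) v. (w', v') \<in> Z"
        by (rule zig[rule_format, OF a1])
      then obtain v' where b1: "v' \<in> inter_rel N (\<sigma> ` X) v" and b3: "(w', v') \<in> Z"
        by (elim bexE)
      have "ksat N v' \<sigma> \<alpha>" using R b1 by simp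
      then show "ksat M w' \<sigma> \<alpha>" using Know.IH[OF b3] by simp
    qed
  qed
next
  case Top then show ?case by simp
next
  case (Neg \<psi>) then show ?case by simp
next
  case (Conj a b) then show ?case by simp
qed

theorem theorem1:
  fixes C :: "('v1, 'a::finite, 'p::countable) smodel"
    and D :: "('v2, 'a, 'p) smodel"
    and M :: "('w1, 'a, 'p) kmodel"
    and N :: "('w2, 'a, 'p) kmodel"
    and F :: "'v1 set" and G :: "'v2 set" and w :: 'w1 and v :: 'w2
  shows "(simplicial_model C \<and> simplicial_model D \<and> F \<in> facets C \<and> G \<in> facets D \<and>
            s_bisimilar C F D G \<longrightarrow> s_lequiv TYPE('x::countable) C F D G)
       \<and> (kripke_model M \<and> kripke_model N \<and> w \<in> worlds M \<and> v \<in> worlds N \<and>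
            k_bisimilar M w N v \<longrightarrow> k_lequiv TYPE('x) M w N v)"
proof (intro conjI impI)
  assume "simplicial_model C \<and> simplicial_model D \<and> F \<in> facets C \<and> G \<in> facets D \<and>
            s_bisimilar C F D G"
  then obtain Z where Z: "s_bisimulation C D Z" and FG: "(F, G) \<in> Z"
    unfolding s_bisimilar_def by (elim conjE exE)
  show "s_lequiv TYPE('x) C F D G"
    unfolding s_lequiv_def
  proof (intro allI impI)
    fix \<phi> :: "('a, 'x, 'p) form" and \<sigma> :: "'x \<Rightarrow> 'a"
    show "ssat C F \<sigma> \<phi> = ssat D G \<sigma> \<phi>" by (rule s_bisim_sat[OF Z FG])
  qed
next
  assume "kripke_model M \<and> kripke_model N \<and> w \<in> worlds M \<and> v \<in> worlds N \<and>
            k_bisimilar M w N v"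
  then obtain Z where Z: "k_bisimulation M N Z" and wv: "(w, v) \<in> Z"
    unfolding k_bisimilar_def by (elim conjE exE)
  show "k_lequiv TYPE('x) M w N v"
    unfolding k_lequiv_def
  proof (intro allI impI)
    fix \<phi> :: "('a, 'x, 'p) form" and \<sigma> :: "'x \<Rightarrow> 'a"
    show "ksat M w \<sigma> \<phi> = ksat N v \<sigma> \<phi>" by (rule k_bisim_sat[OF Z wv])
  qed
qed

end
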